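(* Let $M\ge1$ and consider a memoryless channel with binary input $\{0,1\}$, output alphabet $\mathcal{Y}=\{-M,\dots,M\}$ and transition probabilities $\varepsilon_{y|x}$ satisfying $\varepsilon_{y|1}=\varepsilon_{-y|0}$ for all $y$. Let $\mathcal{C}\subseteq\{0,1\}^n$ be a binary linear code with minimum distance $d_{\min}$ and weight distribution $S_w$, used with maximum-likelihood decoding. Let $\mathbf{m}=(m_{-M+1},\dots,m_M)\in\mathbb{Z}_+^{2M}$. Then the decoding error probability satisfies $$P_e\le\sum_{\boldsymbol{\ell}\in\tilde{\mathcal{U}}_n(\mathbf{m})}\Big(\prod_{j=-M}^M\varepsilon_{j|0}^{\ell_j}\Big)\min\Bigg\{\sum_{w=d_{\min}}^n S_w\sum_{\substack{\boldsymbol{\mu}\in\mathcal{U}_w(\boldsymbol{\ell})\\ \sum_j\mu_j\mathrm{LLR}_j\le0}}\binom{w}{\mu_{-M},\dots,\mu_M}\binom{n-w}{\ell_{-M}-\mu_{-M},\dots,\ell_M-\mu_M},\ \binom{n}{\ell_{-M},\dots,\ell_M}\Bigg\}+\sum_{\substack{\boldsymbol{\ell}\in\mathbb{Z}_+^{2M+1},\ \sum_j\ell_j=n\\ \boldsymbol{\ell}\notin\tilde{\mathcal{U}}_n(\mathbf{m})}}\Big(\prod_{j=-M}^M\varepsilon_{j|0}^{\ell_j}\Big)\binom{n}{\ell_{-M},\dots,\ell_M}.$$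
   Context: $\mathbb{Z}_+$ denotes the nonnegative integers; $S_w$ is the number of codewords of Hamming weight $w$; $\binom{m}{a_1,\dots,a_k}=m!/(a_1!\cdots a_k!)$. $\tilde{\mathcal{U}}_n(\mathbf{m})=\{\boldsymbol{\ell}=(\ell_{-M},\dots,\ell_M)\in\mathbb{Z}_+^{2M+1}:\ \sum_j\ell_j=n,\ \ell_j\le m_j\ \text{for } j=-M+1,\dots,M\}$ (no constraint on $\ell_{-M}$). For $\boldsymbol{\ell}$ with $\sum_j\ell_j=n$, $\mathcal{U}_w(\boldsymbol{\ell})=\{\boldsymbol{\mu}\in\mathbb{Z}_+^{2M+1}:\ \sum_j\mu_j=w,\ \mu_j\le\ell_j\ \forall j\}$. $\mathrm{LLR}_j=\log(\varepsilon_{j|0}/\varepsilon_{j|1})$, and $\sum_j\mu_j\mathrm{LLR}_j\le0$ means $\prod_j(\varepsilon_{j|0}/\varepsilon_{j|1})^{\mu_j}\le1$. The error probability is the probability that the decoder does not output the transmitted codeword, with likelihood ties counted as errors; by linearity and symmetry it does not depend on the transmitted codeword. *)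

theory Defs
  imports Complex_Main
begin

text \<open>Binary input symbols: False = 0, True = 1. Output alphabet {-M..M} (integers).
  A channel is a function eps :: int => bool => real with eps y x = transition probability.\<close>

definition outputs :: "nat \<Rightarrow> nat \<Rightarrow> int list set" where
  "outputs M n = {ys. length ys = n \<and> set ys \<subseteq> {- int M .. int M}}"

definition lik :: "(int \<Rightarrow> bool \<Rightarrow> real) \<Rightarrow> int list \<Rightarrow> bool list \<Rightarrow> real" where
  "lik eps ys c = (\<Prod>i<length ys. eps (ys ! i) (c ! i))"

text \<open>Error probability of ML decoding when codeword c is transmitted; ties count as errors.\<close>
definition err_prob :: "nat \<Rightarrow> nat \<Rightarrow> (int \<Rightarrow> bool \<Rightarrow> real) \<Rightarrow> bool list set \<Rightarrow> bool list \<Rightarrow> real" where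
  "err_prob M n eps C c =
     (\<Sum>ys\<in>outputs M n.
        if (\<exists>c'\<in>C. c' \<noteq> c \<and> lik eps ys c \<le> lik eps ys c') then lik eps ys c else 0)"

definition hweight :: "bool list \<Rightarrow> nat" where
  "hweight c = length (filter id c)"

definition binary_linear_code :: "nat \<Rightarrow> bool list set \<Rightarrow> bool" where
  "binary_linear_code n C \<longleftrightarrow> C \<subseteq> {c. length c = n} \<and> replicate n False \<in> C \<and>
     (\<forall>a\<in>C. \<forall>b\<in>C. map2 (\<noteq>) a b \<in> C)"

text \<open>Minimum distance = minimum weight of a nonzero codeword (linear code).\<close>
definition dmin :: "bool list set \<Rightarrow> nat" where
  "dmin C = Inf {hweight c | c. c \<in> C \<and> hweight c \<noteq> 0}"

definition wdist :: "bool list set \<Rightarrow> nat \<Rightarrow> nat" where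
  "wdist C w = card {c\<in>C. hweight c = w}"

definition comps :: "nat \<Rightarrow> nat \<Rightarrow> (int \<Rightarrow> nat) set" where
  "comps M n = {l. (\<forall>j. j \<notin> {- int M .. int M} \<longrightarrow> l j = 0) \<and> (\<Sum>j = - int M .. int M. l j) = n}"

definition Ut :: "nat \<Rightarrow> nat \<Rightarrow> (int \<Rightarrow> nat) \<Rightarrow> (int \<Rightarrow> nat) set" where
  "Ut M n m = {l \<in> comps M n. \<forall>j \<in> {- int M + 1 .. int M}. l j \<le> m j}"

definition Uw :: "nat \<Rightarrow> nat \<Rightarrow> (int \<Rightarrow> nat) \<Rightarrow> (int \<Rightarrow> nat) set" where
  "Uw M w l = {mu \<in> comps M w. \<forall>j. mu j \<le> l j}"

definition multinom :: "nat \<Rightarrow> nat \<Rightarrow> (int \<Rightarrow> nat) \<Rightarrow> real" where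
  "multinom M k l = real (fact k) / (\<Prod>j = - int M .. int M. real (fact (l j)))"

end

theory Submission
  imports Defs "HOL-Combinatorics.Multiset_Permutations"
begin

definition msl :: "int set \<Rightarrow> (int \<Rightarrow> nat) \<Rightarrow> int multiset" where
  "msl S l = (\<Sum>j\<in>S. replicate_mset (l j) j)"

lemma count_msl: "finite S \<Longrightarrow> count (msl S l) x = (if x \<in> S then l x else 0)"
  unfolding msl_def by (simp add: count_sum count_replicate_mset sum.delta)

lemma prod_list_count:
  assumes "finite S" "set xs \<subseteq> S"
  shows "(\<Prod>x\<leftarrow>xs. g x) = (\<Prod>j\<in>S. g j ^ count (mset xs) j)"
  using assms(2)
proof (induction xs)
  case Nil then show ?case by simp
next
  case (Cons a xs)
  have aS: "a \<in> S" using Cons by auto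
  have "(\<Prod>j\<in>S. g j ^ count (mset (a # xs)) j) = (\<Prod>j\<in>S. (if j = a then g j else 1) * g j ^ count (mset xs) j)"
    by (rule prod.cong) auto
  also have "\<dots> = (\<Prod>j\<in>S. (if j = a then g j else 1)) * (\<Prod>j\<in>S. g j ^ count (mset xs) j)"
    by (rule prod.distrib)
  also have "(\<Prod>j\<in>S. (if j = a then g j else 1)) = g a"
    using aS assms(1) by (simp add: prod.delta)
  finally show ?case using Cons by simp
qed

lemma sum_count_eq_size:
  assumes "finite S" "set_mset A \<subseteq> S"
  shows "(\<Sum>j\<in>S. count A j) = size A"
proof -
  have "size A = (\<Sum>j\<in>set_mset A. count A j)" by (simp add: size_multiset_overloaded_eq)
  also have "\<dots> = (\<Sum>j\<in>S. count A j)"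
    by (rule sum.mono_neutral_left) (use assms in \<open>auto simp: not_in_iff\<close>)
  finally show ?thesis by simp
qed

lemma card_perms_msl:
  assumes "finite S" "\<forall>j. j \<notin> S \<longrightarrow> l j = 0"
  shows "real (card {xs. mset xs = msl S l}) = fact (sum l S) / (\<Prod>j\<in>S. real (fact (l j)))"
proof -
  let ?A = "msl S l"
  have cnt: "count ?A x = l x" for x using assms by (simp add: count_msl)
  have sub: "set_mset ?A \<subseteq> S" using assms cnt by (metis count_eq_zero_iff subsetI)
  have sz: "size ?A = sum l S"
    using sum_count_eq_size[OF assms(1) sub] cnt by simp
  have pr: "(\<Prod>x\<in>set_mset ?A. fact (count ?A x)) = (\<Prod>j\<in>S. fact (l j) :: nat)"
  proof -
    have "(\<Prod>j\<in>S. fact (l j) :: nat) = (\<Prod>j\<in>S. fact (count ?A j))" using cnt by simp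
    also have "\<dots> = (\<Prod>x\<in>set_mset ?A. fact (count ?A x))"
      by (rule prod.mono_neutral_right) (use sub assms(1) in \<open>auto simp: not_in_iff\<close>)
    finally show ?thesis by simp
  qed
  have "card (permutations_of_multiset ?A) * (\<Prod>j\<in>S. fact (l j) :: nat) = fact (sum l S)"
    using card_permutations_of_multiset_aux[of ?A] pr sz by simp
  then have "real (card (permutations_of_multiset ?A)) * (\<Prod>j\<in>S. real (fact (l j))) = fact (sum l S)"
    by (metis (mono_tags, lifting) of_nat_fact of_nat_mult of_nat_prod prod.cong)
  moreover have "(\<Prod>j\<in>S. real (fact (l j))) > 0" by (simp add: prod_pos)
  ultimately show ?thesis unfolding permutations_of_multiset_def
    by (simp add: field_simps)
qed

lemma lik_zero: "lik eps ys (replicate (length ys) False) = (\<Prod>y\<leftarrow>ys. eps y False)"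
  unfolding lik_def by (simp add: prod.list_conv_set_nth atLeast0LessThan)

definition flip :: "bool list \<Rightarrow> int list \<Rightarrow> int list" where
  "flip c ys = map2 (\<lambda>y b. if b then - y else y) ys c"

lemma length_flip[simp]: "length c = length ys \<Longrightarrow> length (flip c ys) = length ys"
  unfolding flip_def by simp

lemma nth_flip: "length c = length ys \<Longrightarrow> i < length ys \<Longrightarrow> flip c ys ! i = (if c ! i then - (ys ! i) else ys ! i)"
  unfolding flip_def by simp

lemma flip_flip: "length c = length ys \<Longrightarrow> flip c (flip c ys) = ys"
  by (rule nth_equalityI) (auto simp: nth_flip)

lemma flip_outputs: "length c = n \<Longrightarrow> ys \<in> outputs M n \<Longrightarrow> flip c ys \<in> outputs M n"
proof -
  assume lc: "length c = n" and ys: "ys \<in> outputs M n"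
  have ly: "length ys = n" and yS: "\<forall>i<length ys. ys ! i \<in> {- int M .. int M}"
    using ys unfolding outputs_def by (auto simp: nth_mem subset_iff)
  have "set (flip c ys) \<subseteq> {- int M .. int M}"
  proof
    fix x assume "x \<in> set (flip c ys)"
    then obtain i where i: "i < length ys" "x = flip c ys ! i" using lc ly by (auto simp: in_set_conv_nth)
    then show "x \<in> {- int M .. int M}" using yS lc ly by (auto simp: nth_flip)
  qed
  then show ?thesis using lc ly unfolding outputs_def by simp
qed

lemma lik_flip:
  assumes sym: "\<And>y. y \<in> {- int M .. int M} \<Longrightarrow> eps y True = eps (- y) False"
    and ys: "ys \<in> outputs M n" and lc: "length c = n" and lc': "length c' = n"
  shows "lik eps ys c' = lik eps (flip c ys) (map2 (\<noteq>) c' c)"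
  unfolding lik_def
proof -
  have ly: "length ys = n" using ys by (simp add: outputs_def)
  show "(\<Prod>i<length ys. eps (ys ! i) (c' ! i)) =
    (\<Prod>i<length (flip c ys). eps (flip c ys ! i) (map2 (\<noteq>) c' c ! i))"
  proof (rule prod.cong)
    fix i assume "i \<in> {..<length (flip c ys)}"
    then have i: "i < n" using ly lc by simp
    have yS: "ys ! i \<in> {- int M .. int M}" using ys i unfolding outputs_def by (auto simp: nth_mem subset_iff)
    then have yS': "- (ys ! i) \<in> {- int M .. int M}" by auto
    show "eps (ys ! i) (c' ! i) = eps (flip c ys ! i) (map2 (\<noteq>) c' c ! i)"
      using i ly lc lc' sym[OF yS] sym[OF yS'] by (cases "c' ! i") (auto simp: nth_flip)
  qed (use ly lc in simp)
qed

lemma map2_self: "map2 (\<noteq>) c c = replicate (length c) False"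
  by (rule nth_equalityI) auto

lemma err_sym:
  assumes sym: "\<And>y. y \<in> {- int M .. int M} \<Longrightarrow> eps y True = eps (- y) False"
    and lin: "binary_linear_code n C" and cC: "c \<in> C"
  shows "err_prob M n eps C c = err_prob M n eps C (replicate n False)"
proof -
  let ?z = "replicate n False"
  have lc: "length c = n" using lin cC unfolding binary_linear_code_def by auto
  have bij: "bij_betw (flip c) (outputs M n) (outputs M n)"
  proof (rule bij_betw_byWitness[where f'="flip c"])
    show "\<forall>a\<in>outputs M n. flip c (flip c a) = a" "\<forall>a\<in>outputs M n. flip c (flip c a) = a"
      using lc by (auto simp: outputs_def flip_flip)
    show "flip c ` outputs M n \<subseteq> outputs M n" "flip c ` outputs M n \<subseteq> outputs M n"
      using flip_outputs[OF lc] by auto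
  qed
  have "err_prob M n eps C ?z = (\<Sum>ys\<in>outputs M n.
        if (\<exists>c'\<in>C. c' \<noteq> ?z \<and> lik eps (flip c ys) ?z \<le> lik eps (flip c ys) c') then lik eps (flip c ys) ?z else 0)"
    unfolding err_prob_def by (rule sum.reindex_bij_betw[OF bij, symmetric])
  also have "\<dots> = err_prob M n eps C c"
    unfolding err_prob_def
  proof (rule sum.cong[OF refl])
    fix ys assume ys: "ys \<in> outputs M n"
    have e1: "lik eps ys c = lik eps (flip c ys) ?z"
      using lik_flip[of M eps, OF sym ys lc lc] map2_self[of c] lc by simp
    have ex: "(\<exists>c'\<in>C. c' \<noteq> ?z \<and> lik eps (flip c ys) ?z \<le> lik eps (flip c ys) c')
          = (\<exists>c'\<in>C. c' \<noteq> c \<and> lik eps ys c \<le> lik eps ys c')"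
    proof
      assume "\<exists>c'\<in>C. c' \<noteq> ?z \<and> lik eps (flip c ys) ?z \<le> lik eps (flip c ys) c'"
      then obtain d where d: "d \<in> C" "d \<noteq> ?z" "lik eps (flip c ys) ?z \<le> lik eps (flip c ys) d" by blast
      have ld: "length d = n" using lin d(1) unfolding binary_linear_code_def by auto
      let ?e = "map2 (\<noteq>) d c"
      have c'C: "?e \<in> C" using lin d(1) cC unfolding binary_linear_code_def by auto
      have lc': "length ?e = n" using ld lc by simp
      have bk: "map2 (\<noteq>) ?e c = d"
        by (rule nth_equalityI) (use ld lc in auto)
      have ne: "?e \<noteq> c"
      proof
        assume "?e = c"
        then have "d = map2 (\<noteq>) c c" using bk by simp
        then show False using d(2) map2_self[of c] lc by simp
      qed
      have "lik eps ys ?e = lik eps (flip c ys) d" using lik_flip[of M eps, OF sym ys lc lc'] bk by simp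
      then show "\<exists>c'\<in>C. c' \<noteq> c \<and> lik eps ys c \<le> lik eps ys c'"
      proof (intro bexI conjI)
        show "?e \<noteq> c" by (fact ne)
        show "lik eps ys c \<le> lik eps ys ?e" using d(3) e1 \<open>lik eps ys ?e = lik eps (flip c ys) d\<close> by simp
      qed (insert c'C, assumption)
    next
      assume "\<exists>c'\<in>C. c' \<noteq> c \<and> lik eps ys c \<le> lik eps ys c'"
      then obtain c' where c': "c' \<in> C" "c' \<noteq> c" "lik eps ys c \<le> lik eps ys c'" by blast
      have lc': "length c' = n" using lin c'(1) unfolding binary_linear_code_def by auto
      let ?d = "map2 (\<noteq>) c' c"
      have dC: "?d \<in> C" using lin c'(1) cC unfolding binary_linear_code_def by auto
      have dne: "?d \<noteq> ?z"
      proof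
        assume h: "?d = ?z"
        have "c' = c"
        proof (rule nth_equalityI)
          show "length c' = length c" using lc lc' by simp
          fix i assume "i < length c'"
          then have "?d ! i = ?z ! i" using h by simp
          then show "c' ! i = c ! i" using \<open>i < length c'\<close> lc lc' by auto
        qed
        then show False using c'(2) by simp
      qed
      show "\<exists>c'\<in>C. c' \<noteq> ?z \<and> lik eps (flip c ys) ?z \<le> lik eps (flip c ys) c'"
        using dC dne c'(3) e1 lik_flip[of M eps, OF sym ys lc lc'] by auto
    qed
    show "(if (\<exists>c'\<in>C. c' \<noteq> ?z \<and> lik eps (flip c ys) ?z \<le> lik eps (flip c ys) c') then lik eps (flip c ys) ?z else 0)
       = (if (\<exists>c'\<in>C. c' \<noteq> c \<and> lik eps ys c \<le> lik eps ys c') then lik eps ys c else 0)"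
      by (simp only: ex e1)
  qed
  finally show ?thesis by simp
qed

lemma finite_comps: "finite (comps M k)"
proof -
  let ?S = "{- int M .. int M}"
  have "comps M k \<subseteq> {f. \<forall>x. (x \<in> ?S \<longrightarrow> f x \<in> {0..k}) \<and> (x \<notin> ?S \<longrightarrow> f x = 0)}"
  proof safe
    fix f x assume f: "f \<in> comps M k" and x: "x \<in> ?S"
    have "f x \<le> (\<Sum>j\<in>?S. f j)" by (rule member_le_sum) (use x in auto)
    then show "f x \<in> {0..k}" using f unfolding comps_def by auto
  qed (auto simp: comps_def)
  moreover have "finite {f. \<forall>x. (x \<in> ?S \<longrightarrow> f x \<in> {0..k}) \<and> (x \<notin> ?S \<longrightarrow> (f x :: nat) = 0)}"
    by (rule finite_set_of_finite_funs) auto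
  ultimately show ?thesis by (rule finite_subset)
qed

lemma multinom_card:
  assumes "l \<in> comps M k"
  shows "real (card {xs. mset xs = msl {- int M .. int M} l}) = multinom M k l"
  using assms card_perms_msl[of "{- int M .. int M}" l] unfolding comps_def multinom_def by auto

lemma mset_sls: "mset (sorted_list_of_set A) = mset_set A"
  by (metis mset_sorted_list_of_multiset sorted_list_of_mset_set)

lemma mset_split:
  assumes "length ys = n" "P \<subseteq> {..<n}"
  shows "mset ys = mset (map ((!) ys) (sorted_list_of_set P)) + mset (map ((!) ys) (sorted_list_of_set ({..<n} - P)))"
proof -
  have fP: "finite P" using assms(2) finite_subset by blast
  have "ys = map ((!) ys) [0..<n]" using assms(1) map_nth[of ys] by simp
  then have "mset ys = image_mset ((!) ys) (mset_set {..<n})" by (metis mset_map mset_upt atLeast0LessThan)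
  also have "{..<n} = P \<union> ({..<n} - P)" using assms(2) by auto
  also have "mset_set (P \<union> ({..<n} - P)) = mset_set P + mset_set ({..<n} - P)"
    by (rule mset_set_Union) (use fP in auto)
  finally show ?thesis using fP by (simp add: mset_sls)
qed

lemma count_one:
  fixes M n w :: nat and eps :: "int \<Rightarrow> bool \<Rightarrow> real" and l :: "int \<Rightarrow> nat" and c' :: "bool list"
  defines "S \<equiv> {- int M .. int M}"
  assumes nn: "\<And>y x. y \<in> S \<Longrightarrow> eps y x \<ge> 0"
    and l: "l \<in> comps M n"
    and pos: "(\<Prod>j\<in>S. eps j False ^ l j) > 0"
    and lc: "length c' = n" and hw: "hweight c' = w"
  shows "real (card {ys. mset ys = msl S l \<and> lik eps ys (replicate n False) \<le> lik eps ys c'}) \<le>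
    (\<Sum>mu\<in>{mu \<in> Uw M w l. (\<Prod>j\<in>S. eps j False ^ mu j) \<le> (\<Prod>j\<in>S. eps j True ^ mu j)}.
       multinom M w mu * multinom M (n - w) (\<lambda>j. l j - mu j))"
proof -
  define P where "P = {i. i < n \<and> c' ! i}"
  define Q where "Q = {..<n} - P"
  define ps where "ps = sorted_list_of_set P"
  define qs where "qs = sorted_list_of_set Q"
  define phi where "phi = (\<lambda>ys::int list. (map ((!) ys) ps, map ((!) ys) qs))"
  define Mu where "Mu = {mu \<in> Uw M w l. (\<Prod>j\<in>S. eps j False ^ mu j) \<le> (\<Prod>j\<in>S. eps j True ^ mu j)}"
  define Y where "Y = {ys. mset ys = msl S l \<and> lik eps ys (replicate n False) \<le> lik eps ys c'}"
  define T where "T = (\<Union>mu\<in>Mu. {xs. mset xs = msl S mu} \<times> {xs. mset xs = msl S (\<lambda>j. l j - mu j)})"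
  have fS: "finite S" unfolding S_def by simp
  have Psub: "P \<subseteq> {..<n}" unfolding P_def by auto
  have fP: "finite P" using Psub finite_subset by blast
  have fQ: "finite Q" unfolding Q_def by simp
  have setps: "set ps = P" and dps: "distinct ps" unfolding ps_def using fP by auto
  have setqs: "set qs = Q" and dqs: "distinct qs" unfolding qs_def using fQ by auto
  have cardP: "card P = w"
    using hw lc unfolding hweight_def P_def by (simp add: length_filter_conv_card)
  have lps: "length ps = w" using cardP dps setps distinct_card by fastforce
  have lcomp: "\<forall>j. j \<notin> S \<longrightarrow> l j = 0" and lsum: "(\<Sum>j\<in>S. l j) = n"
    using l unfolding comps_def S_def by auto
  have cntl: "count (msl S l) j = l j" for j using lcomp fS by (simp add: count_msl)
  have szl: "size (msl S l) = n"
  proof -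
    have "set_mset (msl S l) \<subseteq> S"
    proof
      fix x assume "x \<in># msl S l"
      then have "count (msl S l) x > 0" by simp
      then show "x \<in> S" using cntl[of x] lcomp by (cases "x \<in> S") auto
    qed
    then have "size (msl S l) = (\<Sum>j\<in>S. count (msl S l) j)" using sum_count_eq_size[OF fS] by simp
    then show ?thesis using cntl lsum by simp
  qed
  have fMu: "finite Mu"
  proof -
    have "Mu \<subseteq> comps M w" unfolding Mu_def Uw_def by auto
    then show ?thesis using finite_comps finite_subset by blast
  qed
  have fT: "finite T" unfolding T_def using fMu
    by (auto intro!: finite_cartesian_product simp flip: permutations_of_multiset_def)
  have inj: "inj_on phi Y"
  proof (rule inj_onI)
    fix a b assume a: "a \<in> Y" and b: "b \<in> Y" and e: "phi a = phi b"
    have la: "length a = n"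
    proof -
      have "mset a = msl S l" using a unfolding Y_def by simp
      then have "size (mset a) = n" using szl by simp
      then show ?thesis by simp
    qed
    have lb: "length b = n"
    proof -
      have "mset b = msl S l" using b unfolding Y_def by simp
      then have "size (mset b) = n" using szl by simp
      then show ?thesis by simp
    qed
    have eP: "\<forall>x\<in>set ps. a ! x = b ! x" and eQ: "\<forall>x\<in>set qs. a ! x = b ! x"
      using e unfolding phi_def by simp_all
    show "a = b"
    proof (rule nth_equalityI)
      show "length a = length b" using la lb by simp
      fix i assume i: "i < length a"
      show "a ! i = b ! i"
      proof (cases "i \<in> P")
        case True
        then show ?thesis using eP setps by auto
      next
        case False
        then have "i \<in> Q" using i la unfolding Q_def by auto
        then show ?thesis using eQ setqs by auto
      qed
    qed
  qed
  have img: "phi ` Y \<subseteq> T"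
  proof
    fix p assume "p \<in> phi ` Y"
    then obtain ys where ys: "ys \<in> Y" and p: "p = phi ys" by blast
    have ms: "mset ys = msl S l" and le: "lik eps ys (replicate n False) \<le> lik eps ys c'"
      using ys unfolding Y_def by auto
    have setys: "set ys \<subseteq> S"
    proof
      fix y assume "y \<in> set ys"
      then have "count (mset ys) y > 0" by simp
      then have "l y > 0" using ms cntl by simp
      then show "y \<in> S" using lcomp by auto
    qed
    have ly: "length ys = n"
    proof -
      have "size (mset ys) = n" using ms szl by simp
      then show ?thesis by simp
    qed
    define xs1 where "xs1 = map ((!) ys) ps"
    define xs2 where "xs2 = map ((!) ys) qs"
    define mu where "mu = (\<lambda>j. count (mset xs1) j)"
    have split: "mset ys = mset xs1 + mset xs2"
      using mset_split[OF ly Psub] unfolding xs1_def xs2_def ps_def qs_def Q_def by simp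
    have cys: "count (mset ys) j = mu j + count (mset xs2) j" for j using split unfolding mu_def by simp
    have mul: "mu j \<le> l j" for j using cys[of j] cntl ms by simp
    have cnt2: "count (mset xs2) j = l j - mu j" for j using cys[of j] cntl ms by simp
    have mu0: "\<forall>j. j \<notin> S \<longrightarrow> mu j = 0"
    proof (intro allI impI)
      fix j assume "j \<notin> S" then show "mu j = 0" using mul[of j] lcomp by simp
    qed
    have set1: "set_mset (mset xs1) \<subseteq> S" using mu0 unfolding mu_def by (auto simp: not_in_iff[symmetric])
    have set1': "set xs1 \<subseteq> S" using set1 by simp
    have musum: "(\<Sum>j\<in>S. mu j) = w"
      using sum_count_eq_size[OF fS set1] lps unfolding mu_def xs1_def by simp
    have muUw: "mu \<in> Uw M w l"
      using mu0 musum mul unfolding Uw_def comps_def S_def by auto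
    have m1: "mset xs1 = msl S mu"
      by (rule multiset_eqI) (use mu0 fS in \<open>simp add: count_msl mu_def\<close>)
    have m2: "mset xs2 = msl S (\<lambda>j. l j - mu j)"
      by (rule multiset_eqI) (use mu0 lcomp fS cnt2 in \<open>simp add: count_msl\<close>)
    have prodP: "(\<Prod>i\<in>P. eps (ys ! i) b) = (\<Prod>j\<in>S. eps j b ^ mu j)" for b
    proof -
      have "(\<Prod>i\<in>P. eps (ys ! i) b) = (\<Prod>i\<leftarrow>ps. eps (ys ! i) b)"
        using prod.distinct_set_conv_list[OF dps, of "\<lambda>i. eps (ys ! i) b"] setps by simp
      also have "\<dots> = (\<Prod>y\<leftarrow>xs1. eps y b)" unfolding xs1_def by (simp add: comp_def)
      also have "\<dots> = (\<Prod>j\<in>S. eps j b ^ mu j)" unfolding mu_def by (rule prod_list_count[OF fS set1'])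
      finally show ?thesis .
    qed
    define R where "R = (\<Prod>i\<in>Q. eps (ys ! i) False)"
    have Rnn: "R \<ge> 0" unfolding R_def
      by (rule prod_nonneg) (use setys ly nn in \<open>auto simp: Q_def nth_mem subset_iff\<close>)
    have likc: "lik eps ys c = (\<Prod>i\<in>P. eps (ys ! i) (c ! i)) * (\<Prod>i\<in>Q. eps (ys ! i) (c ! i))" for c
      unfolding lik_def ly Q_def using prod.subset_diff[OF Psub, of "\<lambda>i. eps (ys ! i) (c ! i)"] by (simp add: mult.commute)
    have lz: "lik eps ys (replicate n False) = (\<Prod>j\<in>S. eps j False ^ mu j) * R"
      using likc[of "replicate n False"] prodP[of False] unfolding R_def Q_def P_def by simp
    have lc': "lik eps ys c' = (\<Prod>j\<in>S. eps j True ^ mu j) * R"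
    proof -
      have "(\<Prod>i\<in>P. eps (ys ! i) (c' ! i)) = (\<Prod>i\<in>P. eps (ys ! i) True)"
        by (rule prod.cong) (auto simp: P_def)
      moreover have "(\<Prod>i\<in>Q. eps (ys ! i) (c' ! i)) = R"
        unfolding R_def by (rule prod.cong) (auto simp: Q_def P_def)
      ultimately show ?thesis using likc[of c'] prodP[of True] by simp
    qed
    have lzpos: "lik eps ys (replicate n False) > 0"
      using pos lik_zero[of eps ys] ly prod_list_count[OF fS setys, of "\<lambda>y. eps y False"] ms cntl by simp
    have Rpos: "R > 0" using lzpos lz Rnn by (cases "R = 0") auto
    have cond: "(\<Prod>j\<in>S. eps j False ^ mu j) \<le> (\<Prod>j\<in>S. eps j True ^ mu j)"
      using le lz lc' Rpos by simp
    have "mu \<in> Mu" unfolding Mu_def using muUw cond by simp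
    then show "p \<in> T" unfolding T_def p phi_def using m1 m2 xs1_def xs2_def by blast
  qed
  have "card Y \<le> card T" by (rule card_inj_on_le[OF inj img fT])
  also have "card T \<le> (\<Sum>mu\<in>Mu. card ({xs. mset xs = msl S mu} \<times> {xs. mset xs = msl S (\<lambda>j. l j - mu j)}))"
    unfolding T_def by (rule card_UN_le[OF fMu])
  finally have "real (card Y) \<le> (\<Sum>mu\<in>Mu. real (card {xs. mset xs = msl S mu}) * real (card {xs. mset xs = msl S (\<lambda>j. l j - mu j)}))"
    by (simp add: card_cartesian_product flip: of_nat_sum of_nat_mult)
  also have "\<dots> = (\<Sum>mu\<in>Mu. multinom M w mu * multinom M (n - w) (\<lambda>j. l j - mu j))"
  proof (rule sum.cong[OF refl])
    fix mu assume "mu \<in> Mu"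
    then have mu: "mu \<in> comps M w" and mul: "\<forall>j. mu j \<le> l j" unfolding Mu_def Uw_def by auto
    have "(\<Sum>j\<in>S. l j - mu j) = (\<Sum>j\<in>S. l j) - (\<Sum>j\<in>S. mu j)"
      by (rule sum_subtractf_nat) (use mul in auto)
    then have "(\<lambda>j. l j - mu j) \<in> comps M (n - w)"
      using mu l unfolding comps_def S_def by auto
    then show "real (card {xs. mset xs = msl S mu}) * real (card {xs. mset xs = msl S (\<lambda>j. l j - mu j)}) =
      multinom M w mu * multinom M (n - w) (\<lambda>j. l j - mu j)"
      using multinom_card mu unfolding S_def by simp
  qed
  finally show ?thesis unfolding Y_def Mu_def by simp
qed

lemma multinom_nonneg: "multinom M k l \<ge> 0"
  unfolding multinom_def by (simp add: prod_nonneg)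

lemma finite_C: "binary_linear_code n C \<Longrightarrow> finite C"
proof -
  assume "binary_linear_code n C"
  then have "C \<subseteq> {xs. set xs \<subseteq> (UNIV::bool set) \<and> length xs = n}" unfolding binary_linear_code_def by auto
  moreover have "finite {xs. set xs \<subseteq> (UNIV::bool set) \<and> length xs = n}" by (rule finite_lists_length_eq) simp
  ultimately show ?thesis by (rule finite_subset)
qed

lemma weight_range:
  assumes lin: "binary_linear_code n C" and c: "c' \<in> C" "c' \<noteq> replicate n False"
  shows "hweight c' \<in> {dmin C .. n}"
proof -
  have lc: "length c' = n" using lin c unfolding binary_linear_code_def by auto
  have "\<exists>i<n. c' ! i"
  proof (rule ccontr)
    assume "\<not> (\<exists>i<n. c' ! i)"
    then have "c' = replicate n False" using lc by (intro nth_equalityI) auto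
    then show False using c by simp
  qed
  then obtain i where i: "i < n" "c' ! i" by blast
  have "hweight c' \<noteq> 0"
  proof
    assume "hweight c' = 0"
    then have "filter id c' = []" unfolding hweight_def by simp
    then have "\<forall>x\<in>set c'. \<not> x" by (simp add: filter_empty_conv)
    then show False using i lc by (metis nth_mem)
  qed
  then have "hweight c' \<in> {hweight c | c. c \<in> C \<and> hweight c \<noteq> 0}" using c by blast
  then have "dmin C \<le> hweight c'" unfolding dmin_def by (rule cInf_lower) simp
  moreover have "hweight c' \<le> n" unfolding hweight_def using lc by (metis length_filter_le)
  ultimately show ?thesis by simp
qed

lemma card_E:
  fixes M n :: nat and eps :: "int \<Rightarrow> bool \<Rightarrow> real" and l :: "int \<Rightarrow> nat"
  assumes nn: "\<And>y x. y \<in> {- int M .. int M} \<Longrightarrow> eps y x \<ge> 0"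
    and lin: "binary_linear_code n C"
    and l: "l \<in> comps M n"
    and pos: "(\<Prod>j = - int M .. int M. eps j False ^ l j) > 0"
  shows "real (card {ys. mset ys = msl {- int M .. int M} l \<and>
            (\<exists>c'\<in>C. c' \<noteq> replicate n False \<and> lik eps ys (replicate n False) \<le> lik eps ys c')}) \<le>
    (\<Sum>w = dmin C .. n. real (wdist C w) *
              (\<Sum>mu\<in>{mu \<in> Uw M w l.
                       (\<Prod>j = - int M .. int M. eps j False ^ mu j)
                         \<le> (\<Prod>j = - int M .. int M. eps j True ^ mu j)}.
                 multinom M w mu * multinom M (n - w) (\<lambda>j. l j - mu j)))"
proof -
  let ?S = "{- int M .. int M}"
  let ?z = "replicate n False"
  define H where "H w = (\<Sum>mu\<in>{mu \<in> Uw M w l.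
                       (\<Prod>j = - int M .. int M. eps j False ^ mu j)
                         \<le> (\<Prod>j = - int M .. int M. eps j True ^ mu j)}.
                 multinom M w mu * multinom M (n - w) (\<lambda>j. l j - mu j))" for w
  define A where "A c' = {ys. mset ys = msl ?S l \<and> lik eps ys ?z \<le> lik eps ys c'}" for c'
  let ?D = "C - {?z}"
  have fC: "finite C" using lin by (rule finite_C)
  have fD: "finite ?D" using fC by simp
  have Hnn: "H w \<ge> 0" for w unfolding H_def by (intro sum_nonneg mult_nonneg_nonneg multinom_nonneg)
  have "{ys. mset ys = msl ?S l \<and> (\<exists>c'\<in>C. c' \<noteq> ?z \<and> lik eps ys ?z \<le> lik eps ys c')} = (\<Union>c'\<in>?D. A c')"
    unfolding A_def by auto
  then have "card {ys. mset ys = msl ?S l \<and> (\<exists>c'\<in>C. c' \<noteq> ?z \<and> lik eps ys ?z \<le> lik eps ys c')}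
      \<le> (\<Sum>c'\<in>?D. card (A c'))" using card_UN_le[OF fD, of A] by simp
  then have "real (card {ys. mset ys = msl ?S l \<and> (\<exists>c'\<in>C. c' \<noteq> ?z \<and> lik eps ys ?z \<le> lik eps ys c')})
      \<le> (\<Sum>c'\<in>?D. real (card (A c')))" by (simp flip: of_nat_sum)
  also have "\<dots> \<le> (\<Sum>c'\<in>?D. H (hweight c'))"
  proof (rule sum_mono)
    fix c' assume c': "c' \<in> ?D"
    have lc: "length c' = n" using lin c' unfolding binary_linear_code_def by auto
    show "real (card (A c')) \<le> H (hweight c')"
      unfolding A_def H_def using count_one[of M eps l n c' "hweight c'", OF _ l _ lc refl] nn pos by blast
  qed
  also have "\<dots> = (\<Sum>w\<in>{dmin C .. n}. (\<Sum>c'\<in>{c' \<in> ?D. hweight c' = w}. H (hweight c')))"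
  proof (rule sum.group[symmetric, OF fD])
    show "hweight ` ?D \<subseteq> {dmin C .. n}"
    proof
      fix x assume "x \<in> hweight ` ?D"
      then obtain d where "d \<in> C" "d \<noteq> ?z" "x = hweight d" by blast
      then show "x \<in> {dmin C .. n}" using weight_range[OF lin] by blast
    qed
  qed simp
  also have "\<dots> = (\<Sum>w\<in>{dmin C .. n}. real (card {c' \<in> ?D. hweight c' = w}) * H w)"
    by (rule sum.cong) auto
  also have "\<dots> \<le> (\<Sum>w\<in>{dmin C .. n}. real (wdist C w) * H w)"
  proof (rule sum_mono)
    fix w
    have "card {c' \<in> ?D. hweight c' = w} \<le> wdist C w"
      unfolding wdist_def by (rule card_mono) (use fC in auto)
    then show "real (card {c' \<in> ?D. hweight c' = w}) * H w \<le> real (wdist C w) * H w"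
      using Hnn[of w] by (simp add: mult_right_mono)
  qed
  finally show ?thesis unfolding H_def by simp
qed

theorem corollary1:
  fixes M n :: nat and eps :: "int \<Rightarrow> bool \<Rightarrow> real" and C :: "bool list set"
    and m :: "int \<Rightarrow> nat" and c :: "bool list"
  assumes "M \<ge> 1"
    and "\<And>y x. y \<in> {- int M .. int M} \<Longrightarrow> eps y x \<ge> 0"
    and "\<And>x. (\<Sum>y = - int M .. int M. eps y x) = 1"
    and "\<And>y. y \<in> {- int M .. int M} \<Longrightarrow> eps y True = eps (- y) False"
    and "binary_linear_code n C"
    and "c \<in> C"
  shows "err_prob M n eps C c \<le>
    (\<Sum>l\<in>Ut M n m.
       (\<Prod>j = - int M .. int M. eps j False ^ l j) *
       min (\<Sum>w = dmin C .. n. real (wdist C w) *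
              (\<Sum>mu\<in>{mu \<in> Uw M w l.
                       (\<Prod>j = - int M .. int M. eps j False ^ mu j)
                         \<le> (\<Prod>j = - int M .. int M. eps j True ^ mu j)}.
                 multinom M w mu * multinom M (n - w) (\<lambda>j. l j - mu j)))
           (multinom M n l))
    + (\<Sum>l\<in>comps M n - Ut M n m.
         (\<Prod>j = - int M .. int M. eps j False ^ l j) * multinom M n l)"
proof -
  note nn = assms(2) and sym = assms(4) and lin = assms(5) and cC = assms(6)
  let ?S = "{- int M .. int M}"
  let ?z = "replicate n False"
  define pi where "pi l = (\<Prod>j = - int M .. int M. eps j False ^ l j)" for l
  define G where "G l = (\<Sum>w = dmin C .. n. real (wdist C w) *
              (\<Sum>mu\<in>{mu \<in> Uw M w l.
                       (\<Prod>j = - int M .. int M. eps j False ^ mu j)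
                         \<le> (\<Prod>j = - int M .. int M. eps j True ^ mu j)}.
                 multinom M w mu * multinom M (n - w) (\<lambda>j. l j - mu j)))" for l
  define E where "E ys = (\<exists>c'\<in>C. c' \<noteq> ?z \<and> lik eps ys ?z \<le> lik eps ys c')" for ys
  define f where "f ys = (if E ys then lik eps ys ?z else 0)" for ys
  define B where "B l = (if l \<in> Ut M n m then min (G l) (multinom M n l) else multinom M n l)" for l
  have fS: "finite ?S" by simp
  have fO: "finite (outputs M n)"
  proof -
    have "finite {xs. set xs \<subseteq> ?S \<and> length xs = n}" by (rule finite_lists_length_eq) simp
    moreover have "outputs M n = {xs. set xs \<subseteq> ?S \<and> length xs = n}" unfolding outputs_def by auto
    ultimately show ?thesis by simp
  qed
  have pinn: "pi l \<ge> 0" for l unfolding pi_def by (rule prod_nonneg) (use nn in auto)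
  have "err_prob M n eps C c = err_prob M n eps C ?z" by (rule err_sym[of M eps, OF sym lin cC])
  also have "\<dots> = (\<Sum>ys\<in>outputs M n. f ys)" unfolding err_prob_def f_def E_def by simp
  also have "\<dots> = (\<Sum>l\<in>comps M n. (\<Sum>ys\<in>{ys \<in> outputs M n. count (mset ys) = l}. f ys))"
  proof (rule sum.group[symmetric, OF fO finite_comps])
    show "(\<lambda>ys. count (mset ys)) ` outputs M n \<subseteq> comps M n"
    proof
      fix l assume "l \<in> (\<lambda>ys. count (mset ys)) ` outputs M n"
      then obtain ys where ys: "ys \<in> outputs M n" and l: "l = count (mset ys)" by blast
      have sub: "set ys \<subseteq> ?S" and ly: "length ys = n" using ys unfolding outputs_def by auto
      have "(\<Sum>j\<in>?S. count (mset ys) j) = size (mset ys)"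
        by (rule sum_count_eq_size) (use sub in auto)
      then show "l \<in> comps M n" unfolding comps_def l using sub ly by (auto simp: not_in_iff[symmetric])
    qed
  qed
  also have "\<dots> \<le> (\<Sum>l\<in>comps M n. pi l * B l)"
  proof (rule sum_mono)
    fix l assume l: "l \<in> comps M n"
    have lcomp: "\<forall>j. j \<notin> ?S \<longrightarrow> l j = 0" and lsum: "(\<Sum>j\<in>?S. l j) = n"
      using l unfolding comps_def by auto
    have cntl: "count (msl ?S l) j = l j" for j using lcomp fS by (simp add: count_msl)
    define Pl where "Pl = {ys. mset ys = msl ?S l}"
    have setP: "{ys \<in> outputs M n. count (mset ys) = l} = Pl"
    proof (rule set_eqI, rule iffI)
      fix ys assume "ys \<in> {ys \<in> outputs M n. count (mset ys) = l}"
      then have "count (mset ys) = l" by simp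
      then show "ys \<in> Pl" unfolding Pl_def by (intro CollectI multiset_eqI) (simp add: cntl)
    next
      fix ys assume "ys \<in> Pl"
      then have ms: "mset ys = msl ?S l" unfolding Pl_def by simp
      have sub: "set ys \<subseteq> ?S"
      proof
        fix y assume "y \<in> set ys"
        then have "count (mset ys) y > 0" by simp
        then show "y \<in> ?S" using ms cntl[of y] lcomp by (cases "y \<in> ?S") auto
      qed
      have "(\<Sum>j\<in>?S. count (mset ys) j) = length ys"
        using sum_count_eq_size[of ?S "mset ys"] sub by simp
      then have "length ys = n" using ms cntl lsum by simp
      then show "ys \<in> {ys \<in> outputs M n. count (mset ys) = l}"
        using sub ms cntl unfolding outputs_def by auto
    qed
    have likP: "lik eps ys ?z = pi l" if "ys \<in> Pl" for ys
    proof -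
      have ms: "mset ys = msl ?S l" using that unfolding Pl_def by simp
      have sub: "set ys \<subseteq> ?S"
      proof
        fix y assume "y \<in> set ys"
        then have "count (mset ys) y > 0" by simp
        then show "y \<in> ?S" using ms cntl[of y] lcomp by (cases "y \<in> ?S") auto
      qed
      have "(\<Sum>j\<in>?S. count (mset ys) j) = length ys"
        using sum_count_eq_size[of ?S "mset ys"] sub by simp
      then have ly: "length ys = n" using ms cntl lsum by simp
      show ?thesis using lik_zero[of eps ys] ly prod_list_count[OF fS sub, of "\<lambda>y. eps y False"] ms cntl
        unfolding pi_def by simp
    qed
    have fPl: "finite Pl" unfolding Pl_def by (simp flip: permutations_of_multiset_def)
    have "(\<Sum>ys\<in>Pl. f ys) = (\<Sum>ys\<in>Pl. if E ys then pi l else 0)"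
      by (rule sum.cong) (auto simp: f_def likP)
    also have "\<dots> = (\<Sum>ys\<in>{ys \<in> Pl. E ys}. pi l)" by (rule sum.inter_filter[OF fPl, symmetric])
    also have "\<dots> = pi l * real (card {ys \<in> Pl. E ys})" by simp
    finally have eq: "(\<Sum>ys\<in>Pl. f ys) = pi l * real (card {ys \<in> Pl. E ys})" .
    have c1: "real (card {ys \<in> Pl. E ys}) \<le> multinom M n l"
    proof -
      have "card {ys \<in> Pl. E ys} \<le> card Pl" by (rule card_mono[OF fPl]) auto
      then show ?thesis using multinom_card[OF l] unfolding Pl_def by linarith
    qed
    have "pi l * real (card {ys \<in> Pl. E ys}) \<le> pi l * B l"
    proof (cases "pi l = 0")
      case True then show ?thesis by simp
    next
      case False
      then have pos: "pi l > 0" using pinn[of l] by simp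
      have c2: "real (card {ys \<in> Pl. E ys}) \<le> G l"
        using card_E[of M eps, OF nn lin l] pos unfolding pi_def G_def Pl_def E_def by simp
      have "real (card {ys \<in> Pl. E ys}) \<le> B l" using c1 c2 unfolding B_def by simp
      then show ?thesis using pos by simp
    qed
    then show "(\<Sum>ys\<in>{ys \<in> outputs M n. count (mset ys) = l}. f ys) \<le> pi l * B l"
      using eq setP by simp
  qed
  also have "\<dots> = (\<Sum>l\<in>Ut M n m. pi l * B l) + (\<Sum>l\<in>comps M n - Ut M n m. pi l * B l)"
  proof -
    have "Ut M n m \<subseteq> comps M n" unfolding Ut_def by auto
    then show ?thesis using sum.subset_diff[of "Ut M n m" "comps M n"] finite_comps by (simp add: add.commute)
  qed
  also have "\<dots> = (\<Sum>l\<in>Ut M n m. pi l * min (G l) (multinom M n l)) + (\<Sum>l\<in>comps M n - Ut M n m. pi l * multinom M n l)"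
    unfolding B_def by (intro arg_cong2[where f="(+)"] sum.cong) auto
  finally show ?thesis unfolding pi_def G_def .
qed

end
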